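(* Let $(\mathcal{C},P)$ be a doctrine with comprehension such that for every $\alpha$ the functor $\lfloor\alpha\rfloor^*$ has a right adjoint $\Pi_{\lfloor\alpha\rfloor}$. If the operation $\alpha\rightarrow\beta:=\Pi_{\lfloor\alpha\rfloor}\lfloor\alpha\rfloor^*\beta$ makes $(\mathcal{C},P)$ implicational (in particular, if it satisfies condition (iv)(c) below), then the comprehension is full. Consequently, for a $\Pi$-doctrine with comprehension which is a restricted $\Pi(\mathcal{C}_P)$-doctrine, this operation provides an implicational structure if and only if comprehension is full.
   Context: A doctrine is a pair $(\mathcal{C},P)$, $\mathcal{C}$ a category with finite products, $P:\mathcal{C}^{op}\to\mathbf{Pos}$ a functor, $f^*=P(f)$. A right adjoint $\Pi_u$ of $u^*$ satisfies $u^*\Pi_u\alpha\le\alpha$, $\beta\le\Pi_uu^*\beta$. Comprehension: every $P(A)$ has a top $\top_A$ and for each $\alpha\in P(A)$ there is $\lfloor\alpha\rfloor:\{\alpha\}\to A$ with $\lfloor\alpha\rfloor^*\alpha=\top_{\{\alpha\}}$ such that every $f:Y\to A$ with $f^*\alpha=\top_Y$ factors uniquely through $\lfloor\alpha\rfloor$; it is full if whenever $\lfloor\alpha\rfloor$ factors through $\lfloor\beta\rfloor$ then $\alpha\le\beta$. $\mathcal{C}_P$ is the class of arrows $\lfloor\alpha\rfloor$. Beck–Chevalley for right adjoints with respect to a pullback-stable class $\mathcal{A}$: for every pullback square $h\circ g=f\circ k$ with $f\in\mathcal{A}$, $h^*\Pi_f\gamma=\Pi_gk^*\gamma$; restricted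 version: only for $\gamma=f^*\xi$. A $\Pi$-doctrine: right adjoints along all product projections satisfying Beck–Chevalley with respect to product projections. Implicational: there is $\rightarrow$ on each $P(A)$ with (ii) $f^*(\alpha\rightarrow\beta)=f^*\alpha\rightarrow f^*\beta$; (iii) $\Pi_{\pi_A}(\pi_A^*\alpha\rightarrow\beta)=\alpha\rightarrow\Pi_{\pi_A}\beta$ for projections $\pi_A:X\times A\to A$; (iv) (a) $\phi\le\psi\rightarrow\phi$; (b) $\gamma\rightarrow(\phi\rightarrow\psi)\le(\gamma\rightarrow\phi)\rightarrow(\gamma\rightarrow\psi)$; (c) if $\gamma\le\phi\rightarrow\psi$ and $\gamma\le\phi$ then $\gamma\le\psi$; (d) if $\phi\le\psi$ then $\gamma\le\phi\rightarrow\psi$. *)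

theory Defs
  imports Main
begin

text \<open>A (small, untyped-carrier) category together with a poset-valued
presheaf P.  Objects live in type 'o, arrows in type 'm; every element of 'm
is an arrow with domain Dm and codomain Cd; composition Cp g f (= g o f) is
meaningful when Dm g = Cd f.  P(A) is the set Pr A ordered by Le A, and
Re f (= f^* ) maps P(Cd f) to P(Dm f).\<close>

record ('o, 'm, 'p) doctrine_data =
  Dm  :: "'m \<Rightarrow> 'o"
  Cd  :: "'m \<Rightarrow> 'o"
  Cp  :: "'m \<Rightarrow> 'm \<Rightarrow> 'm"
  Idt :: "'o \<Rightarrow> 'm"
  Pr  :: "'o \<Rightarrow> 'p set"
  Le  :: "'o \<Rightarrow> 'p \<Rightarrow> 'p \<Rightarrow> bool"
  Re  :: "'m \<Rightarrow> 'p \<Rightarrow> 'p"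

definition category :: "('o, 'm, 'p) doctrine_data \<Rightarrow> bool" where
  "category D \<longleftrightarrow>
     (\<forall>A. Dm D (Idt D A) = A \<and> Cd D (Idt D A) = A) \<and>
     (\<forall>f g. Dm D g = Cd D f \<longrightarrow> Dm D (Cp D g f) = Dm D f \<and> Cd D (Cp D g f) = Cd D g) \<and>
     (\<forall>f. Cp D f (Idt D (Dm D f)) = f \<and> Cp D (Idt D (Cd D f)) f = f) \<and>
     (\<forall>f g h. Dm D g = Cd D f \<and> Dm D h = Cd D g \<longrightarrow>
        Cp D h (Cp D g f) = Cp D (Cp D h g) f)"

definition is_terminal :: "('o, 'm, 'p) doctrine_data \<Rightarrow> 'o \<Rightarrow> bool" where
  "is_terminal D T \<longleftrightarrow> (\<forall>Z. \<exists>!h. Dm D h = Z \<and> Cd D h = T)"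

definition is_product :: "('o, 'm, 'p) doctrine_data \<Rightarrow> 'o \<Rightarrow> 'm \<Rightarrow> 'm \<Rightarrow> bool" where
  "is_product D Y v u \<longleftrightarrow> Dm D v = Y \<and> Dm D u = Y \<and>
     (\<forall>a b. Dm D a = Dm D b \<and> Cd D a = Cd D v \<and> Cd D b = Cd D u \<longrightarrow>
        (\<exists>!h. Dm D h = Dm D a \<and> Cd D h = Y \<and> Cp D v h = a \<and> Cp D u h = b))"

definition has_finite_products :: "('o, 'm, 'p) doctrine_data \<Rightarrow> bool" where
  "has_finite_products D \<longleftrightarrow> (\<exists>T. is_terminal D T) \<and>
     (\<forall>X A. \<exists>Y v u. is_product D Y v u \<and> Cd D v = X \<and> Cd D u = A)"

definition is_projection :: "('o, 'm, 'p) doctrine_data \<Rightarrow> 'm \<Rightarrow> bool" where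
  "is_projection D u \<longleftrightarrow> (\<exists>v. is_product D (Dm D u) v u)"

definition doctrine :: "('o, 'm, 'p) doctrine_data \<Rightarrow> bool" where
  "doctrine D \<longleftrightarrow> category D \<and> has_finite_products D \<and>
     (\<forall>A. (\<forall>x\<in>Pr D A. Le D A x x) \<and>
          (\<forall>x\<in>Pr D A. \<forall>y\<in>Pr D A. \<forall>z\<in>Pr D A. Le D A x y \<and> Le D A y z \<longrightarrow> Le D A x z) \<and>
          (\<forall>x\<in>Pr D A. \<forall>y\<in>Pr D A. Le D A x y \<and> Le D A y x \<longrightarrow> x = y)) \<and>
     (\<forall>f. \<forall>x\<in>Pr D (Cd D f). Re D f x \<in> Pr D (Dm D f)) \<and>
     (\<forall>f. \<forall>x\<in>Pr D (Cd D f). \<forall>y\<in>Pr D (Cd D f).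
          Le D (Cd D f) x y \<longrightarrow> Le D (Dm D f) (Re D f x) (Re D f y)) \<and>
     (\<forall>A. \<forall>x\<in>Pr D A. Re D (Idt D A) x = x) \<and>
     (\<forall>f g. Dm D g = Cd D f \<longrightarrow> (\<forall>x\<in>Pr D (Cd D g). Re D (Cp D g f) x = Re D f (Re D g x)))"

text \<open>Comprehension: tops (stable under reindexing) and, for every
\<alpha> \<in> P(A), an arrow cmp A \<alpha> = \<lfloor>\<alpha>\<rfloor> : {\<alpha>} \<rightarrow> A with the universal property.\<close>
definition has_comprehension ::
  "('o, 'm, 'p) doctrine_data \<Rightarrow> ('o \<Rightarrow> 'p) \<Rightarrow> ('o \<Rightarrow> 'p \<Rightarrow> 'm) \<Rightarrow> bool" where
  "has_comprehension D tp cmp \<longleftrightarrow>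
     (\<forall>A. tp A \<in> Pr D A \<and> (\<forall>x\<in>Pr D A. Le D A x (tp A))) \<and>
     (\<forall>f. Re D f (tp (Cd D f)) = tp (Dm D f)) \<and>
     (\<forall>A. \<forall>\<alpha>\<in>Pr D A. Cd D (cmp A \<alpha>) = A \<and>
        Re D (cmp A \<alpha>) \<alpha> = tp (Dm D (cmp A \<alpha>)) \<and>
        (\<forall>f. Cd D f = A \<and> Re D f \<alpha> = tp (Dm D f) \<longrightarrow>
           (\<exists>!h. Dm D h = Dm D f \<and> Cd D h = Dm D (cmp A \<alpha>) \<and> Cp D (cmp A \<alpha>) h = f)))"

definition full_comprehension ::
  "('o, 'm, 'p) doctrine_data \<Rightarrow> ('o \<Rightarrow> 'p \<Rightarrow> 'm) \<Rightarrow> bool" where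
  "full_comprehension D cmp \<longleftrightarrow>
     (\<forall>A. \<forall>\<alpha>\<in>Pr D A. \<forall>\<beta>\<in>Pr D A.
        (\<exists>h. Dm D h = Dm D (cmp A \<alpha>) \<and> Cd D h = Dm D (cmp A \<beta>) \<and> Cp D (cmp A \<beta>) h = cmp A \<alpha>)
        \<longrightarrow> Le D A \<alpha> \<beta>)"

definition compr_class ::
  "('o, 'm, 'p) doctrine_data \<Rightarrow> ('o \<Rightarrow> 'p \<Rightarrow> 'm) \<Rightarrow> 'm \<Rightarrow> bool" where
  "compr_class D cmp u \<longleftrightarrow> (\<exists>A. \<exists>\<alpha>\<in>Pr D A. u = cmp A \<alpha>)"

definition right_adjoint ::
  "('o, 'm, 'p) doctrine_data \<Rightarrow> 'm \<Rightarrow> ('p \<Rightarrow> 'p) \<Rightarrow> bool" where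
  "right_adjoint D u Pu \<longleftrightarrow>
     (\<forall>x\<in>Pr D (Dm D u). Pu x \<in> Pr D (Cd D u)) \<and>
     (\<forall>x\<in>Pr D (Dm D u). \<forall>y\<in>Pr D (Dm D u). Le D (Dm D u) x y \<longrightarrow> Le D (Cd D u) (Pu x) (Pu y)) \<and>
     (\<forall>x\<in>Pr D (Dm D u). Le D (Dm D u) (Re D u (Pu x)) x) \<and>
     (\<forall>y\<in>Pr D (Cd D u). Le D (Cd D u) y (Pu (Re D u y)))"

definition is_pullback ::
  "('o, 'm, 'p) doctrine_data \<Rightarrow> 'm \<Rightarrow> 'm \<Rightarrow> 'm \<Rightarrow> 'm \<Rightarrow> bool" where
  "is_pullback D h g f k \<longleftrightarrow>
     Dm D h = Cd D g \<and> Dm D f = Cd D k \<and> Cd D h = Cd D f \<and> Dm D g = Dm D k \<and>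
     Cp D h g = Cp D f k \<and>
     (\<forall>a b. Dm D a = Dm D b \<and> Cd D a = Dm D h \<and> Cd D b = Dm D f \<and> Cp D h a = Cp D f b \<longrightarrow>
        (\<exists>!c. Dm D c = Dm D a \<and> Cd D c = Dm D g \<and> Cp D g c = a \<and> Cp D k c = b))"

definition beck_chevalley ::
  "('o, 'm, 'p) doctrine_data \<Rightarrow> ('m \<Rightarrow> bool) \<Rightarrow> ('m \<Rightarrow> 'p \<Rightarrow> 'p) \<Rightarrow> bool" where
  "beck_chevalley D cls Pi \<longleftrightarrow>
     (\<forall>f g h k. cls f \<and> cls g \<and> is_pullback D h g f k \<longrightarrow>
        (\<forall>\<gamma>\<in>Pr D (Dm D f). Re D h (Pi f \<gamma>) = Pi g (Re D k \<gamma>)))"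

definition restricted_beck_chevalley ::
  "('o, 'm, 'p) doctrine_data \<Rightarrow> ('m \<Rightarrow> bool) \<Rightarrow> ('m \<Rightarrow> 'p \<Rightarrow> 'p) \<Rightarrow> bool" where
  "restricted_beck_chevalley D cls Pi \<longleftrightarrow>
     (\<forall>f g h k. cls f \<and> cls g \<and> is_pullback D h g f k \<longrightarrow>
        (\<forall>\<xi>\<in>Pr D (Cd D f). Re D h (Pi f (Re D f \<xi>)) = Pi g (Re D k (Re D f \<xi>))))"

definition Pi_doctrine ::
  "('o, 'm, 'p) doctrine_data \<Rightarrow> ('m \<Rightarrow> 'p \<Rightarrow> 'p) \<Rightarrow> bool" where
  "Pi_doctrine D Pi \<longleftrightarrow> doctrine D \<and>
     (\<forall>u. is_projection D u \<longrightarrow> right_adjoint D u (Pi u)) \<and>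
     beck_chevalley D (is_projection D) Pi"

definition restricted_Pi_class_doctrine ::
  "('o, 'm, 'p) doctrine_data \<Rightarrow> ('m \<Rightarrow> bool) \<Rightarrow> ('m \<Rightarrow> 'p \<Rightarrow> 'p) \<Rightarrow> bool" where
  "restricted_Pi_class_doctrine D cls Pi \<longleftrightarrow> doctrine D \<and>
     (\<forall>u. cls u \<longrightarrow> right_adjoint D u (Pi u)) \<and>
     restricted_beck_chevalley D cls Pi"

definition compr_imp ::
  "('o, 'm, 'p) doctrine_data \<Rightarrow> ('o \<Rightarrow> 'p \<Rightarrow> 'm) \<Rightarrow> ('m \<Rightarrow> 'p \<Rightarrow> 'p) \<Rightarrow> 'o \<Rightarrow> 'p \<Rightarrow> 'p \<Rightarrow> 'p" where
  "compr_imp D cmp Pi A \<alpha> \<beta> = Pi (cmp A \<alpha>) (Re D (cmp A \<alpha>) \<beta>)"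

definition cond_iv_c ::
  "('o, 'm, 'p) doctrine_data \<Rightarrow> ('o \<Rightarrow> 'p \<Rightarrow> 'p \<Rightarrow> 'p) \<Rightarrow> bool" where
  "cond_iv_c D imp \<longleftrightarrow>
     (\<forall>A. \<forall>\<gamma>\<in>Pr D A. \<forall>\<phi>\<in>Pr D A. \<forall>\<psi>\<in>Pr D A.
        Le D A \<gamma> (imp A \<phi> \<psi>) \<and> Le D A \<gamma> \<phi> \<longrightarrow> Le D A \<gamma> \<psi>)"

definition implicational ::
  "('o, 'm, 'p) doctrine_data \<Rightarrow> ('m \<Rightarrow> 'p \<Rightarrow> 'p) \<Rightarrow> ('o \<Rightarrow> 'p \<Rightarrow> 'p \<Rightarrow> 'p) \<Rightarrow> bool" where
  "implicational D Pi imp \<longleftrightarrow>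
     (\<forall>A. \<forall>\<alpha>\<in>Pr D A. \<forall>\<beta>\<in>Pr D A. imp A \<alpha> \<beta> \<in> Pr D A) \<and>
     \<comment> \<open>(ii)\<close>
     (\<forall>f. \<forall>\<alpha>\<in>Pr D (Cd D f). \<forall>\<beta>\<in>Pr D (Cd D f).
        Re D f (imp (Cd D f) \<alpha> \<beta>) = imp (Dm D f) (Re D f \<alpha>) (Re D f \<beta>)) \<and>
     \<comment> \<open>(iii)\<close>
     (\<forall>u. is_projection D u \<longrightarrow> (\<forall>\<alpha>\<in>Pr D (Cd D u). \<forall>\<beta>\<in>Pr D (Dm D u).
        Pi u (imp (Dm D u) (Re D u \<alpha>) \<beta>) = imp (Cd D u) \<alpha> (Pi u \<beta>))) \<and>
     \<comment> \<open>(iv)\<close>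
     (\<forall>A. \<forall>\<gamma>\<in>Pr D A. \<forall>\<phi>\<in>Pr D A. \<forall>\<psi>\<in>Pr D A.
        Le D A \<phi> (imp A \<psi> \<phi>) \<and>
        Le D A (imp A \<gamma> (imp A \<phi> \<psi>)) (imp A (imp A \<gamma> \<phi>) (imp A \<gamma> \<psi>)) \<and>
        (Le D A \<gamma> (imp A \<phi> \<psi>) \<and> Le D A \<gamma> \<phi> \<longrightarrow> Le D A \<gamma> \<psi>) \<and>
        (Le D A \<phi> \<psi> \<longrightarrow> Le D A \<gamma> (imp A \<phi> \<psi>)))"

end

theory Submission
  imports Defs
begin

locale dc =
  fixes D :: "('o, 'm, 'p) doctrine_data" and tp :: "'o \<Rightarrow> 'p" and cmp :: "'o \<Rightarrow> 'p \<Rightarrow> 'm"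
  assumes doc: "doctrine D" and hc: "has_comprehension D tp cmp"
begin

lemma cat: "category D" using doc unfolding doctrine_def by blast

lemma dom_comp: "Dm D g = Cd D f \<Longrightarrow> Dm D (Cp D g f) = Dm D f"
  using cat unfolding category_def by blast
lemma cod_comp: "Dm D g = Cd D f \<Longrightarrow> Cd D (Cp D g f) = Cd D g"
  using cat unfolding category_def by blast
lemma assoc: "Dm D g = Cd D f \<Longrightarrow> Dm D h = Cd D g \<Longrightarrow> Cp D h (Cp D g f) = Cp D (Cp D h g) f"
  using cat unfolding category_def by blast

lemma refl: "x \<in> Pr D A \<Longrightarrow> Le D A x x" using doc unfolding doctrine_def by blast
lemma trans: "x \<in> Pr D A \<Longrightarrow> y \<in> Pr D A \<Longrightarrow> z \<in> Pr D A \<Longrightarrow> Le D A x y \<Longrightarrow> Le D A y z \<Longrightarrow> Le D A x z"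
  using doc unfolding doctrine_def by blast
lemma antisym: "x \<in> Pr D A \<Longrightarrow> y \<in> Pr D A \<Longrightarrow> Le D A x y \<Longrightarrow> Le D A y x \<Longrightarrow> x = y"
  using doc unfolding doctrine_def by blast
lemma Re_Pr: "Cd D f = A \<Longrightarrow> x \<in> Pr D A \<Longrightarrow> Re D f x \<in> Pr D (Dm D f)"
  using doc unfolding doctrine_def by blast
lemma Re_mono: "Cd D f = A \<Longrightarrow> x \<in> Pr D A \<Longrightarrow> y \<in> Pr D A \<Longrightarrow> Le D A x y \<Longrightarrow> Le D (Dm D f) (Re D f x) (Re D f y)"
  using doc unfolding doctrine_def by blast
lemma Re_comp: "Dm D g = Cd D f \<Longrightarrow> x \<in> Pr D (Cd D g) \<Longrightarrow> Re D (Cp D g f) x = Re D f (Re D g x)"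
  using doc unfolding doctrine_def by blast

lemma tp_Pr: "tp A \<in> Pr D A" using hc unfolding has_comprehension_def by blast
lemma tp_top: "x \<in> Pr D A \<Longrightarrow> Le D A x (tp A)" using hc unfolding has_comprehension_def by blast
lemma Re_tp: "Re D f (tp (Cd D f)) = tp (Dm D f)" using hc unfolding has_comprehension_def by blast
lemma Re_tp': "Cd D f = A \<Longrightarrow> Re D f (tp A) = tp (Dm D f)" using Re_tp by blast
lemma cmp_cd: "\<alpha> \<in> Pr D A \<Longrightarrow> Cd D (cmp A \<alpha>) = A" using hc unfolding has_comprehension_def by blast
lemma cmp_Re: "\<alpha> \<in> Pr D A \<Longrightarrow> Re D (cmp A \<alpha>) \<alpha> = tp (Dm D (cmp A \<alpha>))"
  using hc unfolding has_comprehension_def by blast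
lemma cmp_univ: "\<alpha> \<in> Pr D A \<Longrightarrow> Cd D f = A \<Longrightarrow> Re D f \<alpha> = tp (Dm D f) \<Longrightarrow>
   \<exists>!h. Dm D h = Dm D f \<and> Cd D h = Dm D (cmp A \<alpha>) \<and> Cp D (cmp A \<alpha>) h = f"
  using hc unfolding has_comprehension_def by blast

lemma factor: "\<alpha> \<in> Pr D A \<Longrightarrow> Cd D f = A \<Longrightarrow> Re D f \<alpha> = tp (Dm D f) \<Longrightarrow>
   \<exists>h. Dm D h = Dm D f \<and> Cd D h = Dm D (cmp A \<alpha>) \<and> Cp D (cmp A \<alpha>) h = f"
  using cmp_univ by blast

lemma top_eq: "x \<in> Pr D A \<Longrightarrow> Le D A (tp A) x \<Longrightarrow> x = tp A"
  using antisym tp_Pr tp_top by blast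

lemma mono_cmp:
  assumes a: "\<alpha> \<in> Pr D A" and "Dm D h1 = Dm D h2" and "Cd D h1 = Dm D (cmp A \<alpha>)"
    and "Cd D h2 = Dm D (cmp A \<alpha>)" and e: "Cp D (cmp A \<alpha>) h1 = Cp D (cmp A \<alpha>) h2"
  shows "h1 = h2"
proof -
  let ?f = "Cp D (cmp A \<alpha>) h1"
  have cd: "Cd D ?f = A" using assms cod_comp cmp_cd by metis
  have dm: "Dm D ?f = Dm D h1" using assms dom_comp by metis
  have "Re D ?f \<alpha> = Re D h1 (Re D (cmp A \<alpha>) \<alpha>)" using assms Re_comp cmp_cd by metis
  also have "\<dots> = tp (Dm D h1)" using assms cmp_Re Re_tp by metis
  finally have "Re D ?f \<alpha> = tp (Dm D ?f)" using dm by simp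
  from cmp_univ[OF a cd this] show ?thesis using assms dom_comp by metis
qed

lemma adj_iff:
  assumes "right_adjoint D u P" "x \<in> Pr D (Cd D u)" "y \<in> Pr D (Dm D u)"
  shows "Le D (Cd D u) x (P y) \<longleftrightarrow> Le D (Dm D u) (Re D u x) y"
proof
  have P: "\<And>z. z \<in> Pr D (Dm D u) \<Longrightarrow> P z \<in> Pr D (Cd D u)" using assms(1) unfolding right_adjoint_def by blast
  assume "Le D (Cd D u) x (P y)"
  hence "Le D (Dm D u) (Re D u x) (Re D u (P y))" using Re_mono assms P by blast
  moreover have "Le D (Dm D u) (Re D u (P y)) y" using assms(1,3) unfolding right_adjoint_def by blast
  ultimately show "Le D (Dm D u) (Re D u x) y" using trans Re_Pr P assms by blast
next
  have P: "\<And>z. z \<in> Pr D (Dm D u) \<Longrightarrow> P z \<in> Pr D (Cd D u)" using assms(1) unfolding right_adjoint_def by blast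
  assume h: "Le D (Dm D u) (Re D u x) y"
  have "Le D (Cd D u) x (P (Re D u x))" using assms(1,2) unfolding right_adjoint_def by blast
  moreover have "Le D (Cd D u) (P (Re D u x)) (P y)" using assms h Re_Pr unfolding right_adjoint_def by blast
  ultimately show "Le D (Cd D u) x (P y)" using trans Re_Pr P assms by blast
qed

lemma pb_sym: "is_pullback D h g f k \<Longrightarrow> is_pullback D f k h g"
proof -
  assume p: "is_pullback D h g f k"
  show ?thesis unfolding is_pullback_def
  proof (intro conjI allI impI)
    show "Dm D f = Cd D k" "Dm D h = Cd D g" "Cd D f = Cd D h" "Dm D k = Dm D g" "Cp D f k = Cp D h g"
      using p unfolding is_pullback_def by auto
    fix a b assume ab: "Dm D a = Dm D b \<and> Cd D a = Dm D f \<and> Cd D b = Dm D h \<and> Cp D f a = Cp D h b"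
    hence "Dm D b = Dm D a \<and> Cd D b = Dm D h \<and> Cd D a = Dm D f \<and> Cp D h b = Cp D f a" by simp
    hence "\<exists>!c. Dm D c = Dm D b \<and> Cd D c = Dm D g \<and> Cp D g c = b \<and> Cp D k c = a"
      using p unfolding is_pullback_def by blast
    moreover have "Dm D g = Dm D k" "Dm D a = Dm D b" using p ab unfolding is_pullback_def by auto
    ultimately show "\<exists>!c. Dm D c = Dm D a \<and> Cd D c = Dm D k \<and> Cp D k c = a \<and> Cp D g c = b"
      by (metis (no_types, lifting))
  qed
qed

lemma pb_lemma:
  assumes a: "\<alpha> \<in> Pr D (Cd D f)"
  defines "k \<equiv> cmp (Dm D f) (Re D f \<alpha>)"
  shows "\<exists>g. Dm D g = Dm D k \<and> Cd D g = Dm D (cmp (Cd D f) \<alpha>) \<and>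
     Cp D (cmp (Cd D f) \<alpha>) g = Cp D f k \<and> is_pullback D f k (cmp (Cd D f) \<alpha>) g"
proof -
  let ?A = "Cd D f" let ?c = "cmp ?A \<alpha>"
  have ra: "Re D f \<alpha> \<in> Pr D (Dm D f)" using Re_Pr a by blast
  have kcd: "Cd D k = Dm D f" using cmp_cd[OF ra] k_def by simp
  have ccd: "Cd D ?c = ?A" using cmp_cd a by blast
  have fkcd: "Cd D (Cp D f k) = ?A" using cod_comp kcd by metis
  have fkdm: "Dm D (Cp D f k) = Dm D k" using dom_comp kcd by metis
  have "Re D (Cp D f k) \<alpha> = Re D k (Re D f \<alpha>)" using Re_comp kcd a by metis
  also have "\<dots> = tp (Dm D k)" using cmp_Re[OF ra] k_def by simp
  finally have "Re D (Cp D f k) \<alpha> = tp (Dm D (Cp D f k))" using fkdm by simp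
  from factor[OF a fkcd this] obtain g where g: "Dm D g = Dm D k" "Cd D g = Dm D ?c" "Cp D ?c g = Cp D f k"
    using fkdm by metis
  have "is_pullback D f k ?c g"
    unfolding is_pullback_def
  proof (intro conjI allI impI)
    show "Dm D f = Cd D k" using kcd by simp
    show "Dm D ?c = Cd D g" using g by simp
    show "Cd D f = Cd D ?c" using ccd by simp
    show "Dm D k = Dm D g" using g by simp
    show "Cp D f k = Cp D ?c g" using g by simp
    fix x y assume xy: "Dm D x = Dm D y \<and> Cd D x = Dm D f \<and> Cd D y = Dm D ?c \<and> Cp D f x = Cp D ?c y"
    have "Re D x (Re D f \<alpha>) = Re D (Cp D f x) \<alpha>" using Re_comp xy a by metis
    also have "\<dots> = Re D (Cp D ?c y) \<alpha>" using xy by simp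
    also have "\<dots> = Re D y (Re D ?c \<alpha>)" using Re_comp xy a ccd by metis
    also have "\<dots> = tp (Dm D x)" using cmp_Re[OF a] Re_tp xy by metis
    finally have "Re D x (Re D f \<alpha>) = tp (Dm D x)" .
    from factor[OF ra _ this] obtain c where c: "Dm D c = Dm D x" "Cd D c = Dm D k" "Cp D k c = x"
      using xy k_def by metis
    have gc: "Cp D g c = y"
    proof (rule mono_cmp[OF a])
      show "Dm D (Cp D g c) = Dm D y" using dom_comp g c xy by metis
      show "Cd D (Cp D g c) = Dm D ?c" using cod_comp g c by metis
      show "Cd D y = Dm D ?c" using xy by simp
      have "Cp D ?c (Cp D g c) = Cp D (Cp D ?c g) c" using assoc g c by metis
      also have "\<dots> = Cp D (Cp D f k) c" using g by simp
      also have "\<dots> = Cp D f (Cp D k c)" using assoc kcd c by metis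
      finally show "Cp D ?c (Cp D g c) = Cp D ?c y" using c xy by simp
    qed
    show "\<exists>!c. Dm D c = Dm D x \<and> Cd D c = Dm D k \<and> Cp D k c = x \<and> Cp D g c = y"
    proof (rule ex1I[of _ c])
      show "Dm D c = Dm D x \<and> Cd D c = Dm D k \<and> Cp D k c = x \<and> Cp D g c = y" using c gc by simp
      fix c' assume c': "Dm D c' = Dm D x \<and> Cd D c' = Dm D k \<and> Cp D k c' = x \<and> Cp D g c' = y"
      show "c' = c" using mono_cmp[OF ra, of c' c] c c' k_def by simp
    qed
  qed
  thus ?thesis using g by blast
qed

lemma proj_lemma:
  assumes pj: "is_projection D u" and a: "\<alpha> \<in> Pr D (Cd D u)"
    and kdef: "k = cmp (Dm D u) (Re D u \<alpha>)"
    and g: "Dm D g = Dm D k" "Cd D g = Dm D (cmp (Cd D u) \<alpha>)" "Cp D (cmp (Cd D u) \<alpha>) g = Cp D u k"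
  shows "is_projection D g"
proof -
  let ?c = "cmp (Cd D u) \<alpha>"
  obtain v0 where v0: "is_product D (Dm D u) v0 u" using pj unfolding is_projection_def by blast
  have ra: "Re D u \<alpha> \<in> Pr D (Dm D u)" using Re_Pr a by blast
  have kcd: "Cd D k = Dm D u" using cmp_cd[OF ra] kdef by simp
  have v0dm: "Dm D v0 = Dm D u" using v0 unfolding is_product_def by blast
  have ccd: "Cd D ?c = Cd D u" using cmp_cd a by blast
  have "is_product D (Dm D g) (Cp D v0 k) g" unfolding is_product_def
  proof (intro conjI allI impI)
    show "Dm D (Cp D v0 k) = Dm D g" using dom_comp v0dm kcd g by metis
    show "Dm D g = Dm D g" ..
    fix x y assume xy: "Dm D x = Dm D y \<and> Cd D x = Cd D (Cp D v0 k) \<and> Cd D y = Cd D g"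
    have xcd: "Cd D x = Cd D v0" using xy cod_comp v0dm kcd by metis
    have cyd: "Dm D (Cp D ?c y) = Dm D y" "Cd D (Cp D ?c y) = Cd D u" using dom_comp cod_comp xy g ccd by metis+
    have P: "\<forall>a b. Dm D a = Dm D b \<and> Cd D a = Cd D v0 \<and> Cd D b = Cd D u \<longrightarrow>
        (\<exists>!h. Dm D h = Dm D a \<and> Cd D h = Dm D u \<and> Cp D v0 h = a \<and> Cp D u h = b)"
      using v0 unfolding is_product_def by blast
    have uq: "\<exists>!h. Dm D h = Dm D x \<and> Cd D h = Dm D u \<and> Cp D v0 h = x \<and> Cp D u h = Cp D ?c y"
      apply (rule P[THEN spec, THEN spec, THEN mp]) using xy xcd cyd by simp
    obtain m where m: "Dm D m = Dm D x" "Cd D m = Dm D u" "Cp D v0 m = x" "Cp D u m = Cp D ?c y"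
      using uq by blast
    have "Re D m (Re D u \<alpha>) = Re D (Cp D u m) \<alpha>" using Re_comp m a by metis
    also have "\<dots> = Re D y (Re D ?c \<alpha>)" using Re_comp m a xy g ccd by metis
    also have "\<dots> = tp (Dm D m)" using cmp_Re[OF a] Re_tp xy g m by metis
    finally have "Re D m (Re D u \<alpha>) = tp (Dm D m)" .
    from factor[OF ra _ this] obtain h where h: "Dm D h = Dm D m" "Cd D h = Dm D k" "Cp D k h = m"
      using m kdef by metis
    have mono_u: "\<And>h'. Dm D h' = Dm D x \<Longrightarrow> Cd D h' = Dm D g \<Longrightarrow> Cp D (Cp D v0 k) h' = x \<Longrightarrow> Cp D g h' = y \<Longrightarrow> Cp D k h' = m"
    proof -
      fix h' assume h': "Dm D h' = Dm D x" "Cd D h' = Dm D g" "Cp D (Cp D v0 k) h' = x" "Cp D g h' = y"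
      have e1: "Cp D v0 (Cp D k h') = x" using h' assoc v0dm kcd g by metis
      have "Cp D u (Cp D k h') = Cp D (Cp D u k) h'" using assoc kcd h' g by metis
      also have "\<dots> = Cp D (Cp D ?c g) h'" using g by simp
      also have "\<dots> = Cp D ?c y" using assoc g h' by metis
      finally have e2: "Cp D u (Cp D k h') = Cp D ?c y" .
      have d: "Dm D (Cp D k h') = Dm D x" "Cd D (Cp D k h') = Dm D u" using dom_comp cod_comp h' g kcd by metis+
      from uq show "Cp D k h' = m" using d e1 e2 m by blast
    qed
    have hx: "Cp D (Cp D v0 k) h = x" using assoc v0dm kcd h m by metis
    have hy: "Cp D g h = y"
    proof (rule mono_cmp[OF a])
      show "Dm D (Cp D g h) = Dm D y" using dom_comp g h m xy by metis
      show "Cd D (Cp D g h) = Dm D ?c" using cod_comp g h by metis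
      show "Cd D y = Dm D ?c" using xy g by simp
      have "Cp D ?c (Cp D g h) = Cp D (Cp D ?c g) h" using assoc g h by metis
      also have "\<dots> = Cp D (Cp D u k) h" using g by simp
      also have "\<dots> = Cp D u (Cp D k h)" using assoc kcd h by metis
      finally show "Cp D ?c (Cp D g h) = Cp D ?c y" using h m by simp
    qed
    show "\<exists>!h. Dm D h = Dm D x \<and> Cd D h = Dm D g \<and> Cp D (Cp D v0 k) h = x \<and> Cp D g h = y"
    proof (rule ex1I[of _ h])
      show "Dm D h = Dm D x \<and> Cd D h = Dm D g \<and> Cp D (Cp D v0 k) h = x \<and> Cp D g h = y"
        using h m hx hy g by simp
      fix h' assume h': "Dm D h' = Dm D x \<and> Cd D h' = Dm D g \<and> Cp D (Cp D v0 k) h' = x \<and> Cp D g h' = y"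
      have "Cp D k h' = Cp D k h" using mono_u h' h by metis
      thus "h' = h" using mono_cmp[OF ra, of h' h] h h' m g kdef by simp
    qed
  qed
  thus ?thesis unfolding is_projection_def by blast
qed

end

locale dc2 = dc +
  fixes Pi :: "'m \<Rightarrow> 'p \<Rightarrow> 'p"
  assumes adj: "\<alpha> \<in> Pr D A \<Longrightarrow> right_adjoint D (cmp A \<alpha>) (Pi (cmp A \<alpha>))"
begin

abbreviation I where "I \<equiv> compr_imp D cmp Pi"

lemma I_Pr: "\<alpha> \<in> Pr D A \<Longrightarrow> \<beta> \<in> Pr D A \<Longrightarrow> I A \<alpha> \<beta> \<in> Pr D A"
proof -
  assume a: "\<alpha> \<in> Pr D A" and b: "\<beta> \<in> Pr D A"
  have "Re D (cmp A \<alpha>) \<beta> \<in> Pr D (Dm D (cmp A \<alpha>))" using Re_Pr cmp_cd a b by blast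
  thus ?thesis using adj[OF a] cmp_cd[OF a] unfolding right_adjoint_def compr_imp_def by metis
qed

lemma adj_imp:
  assumes x: "x \<in> Pr D A" and a: "a \<in> Pr D A" and b: "b \<in> Pr D A"
  shows "Le D A x (I A a b) \<longleftrightarrow> Le D (Dm D (cmp A a)) (Re D (cmp A a) x) (Re D (cmp A a) b)"
proof -
  have c: "Cd D (cmp A a) = A" using cmp_cd a by blast
  have "Re D (cmp A a) b \<in> Pr D (Dm D (cmp A a))" using Re_Pr c b by blast
  from adj_iff[OF adj[OF a] _ this, of x] show ?thesis using x c unfolding compr_imp_def by simp
qed

lemma full_of_c:
  assumes c: "cond_iv_c D I" shows "full_comprehension D cmp"
  unfolding full_comprehension_def
proof (intro allI ballI impI)
  fix A \<alpha> \<beta> assume a: "\<alpha> \<in> Pr D A" and b: "\<beta> \<in> Pr D A"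
  assume "\<exists>h. Dm D h = Dm D (cmp A \<alpha>) \<and> Cd D h = Dm D (cmp A \<beta>) \<and> Cp D (cmp A \<beta>) h = cmp A \<alpha>"
  then obtain h where h: "Dm D h = Dm D (cmp A \<alpha>)" "Cd D h = Dm D (cmp A \<beta>)" "Cp D (cmp A \<beta>) h = cmp A \<alpha>"
    by blast
  have "Re D (cmp A \<alpha>) \<beta> = Re D h (Re D (cmp A \<beta>) \<beta>)" using Re_comp h b cmp_cd by metis
  also have "\<dots> = tp (Dm D (cmp A \<alpha>))" using cmp_Re[OF b] Re_tp h by metis
  finally have e: "Re D (cmp A \<alpha>) \<beta> = tp (Dm D (cmp A \<alpha>))" .
  have "Le D A \<alpha> (I A \<alpha> \<beta>)" using adj_imp[OF a a b] e cmp_Re[OF a] refl tp_Pr by simp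
  thus "Le D A \<alpha> \<beta>" using c a b refl[OF a] unfolding cond_iv_c_def by blast
qed

lemma cond_c_of_full:
  assumes full: "full_comprehension D cmp"
    and g: "\<gamma> \<in> Pr D A" and p: "\<phi> \<in> Pr D A" and q: "\<psi> \<in> Pr D A"
    and l1: "Le D A \<gamma> (I A \<phi> \<psi>)" and l2: "Le D A \<gamma> \<phi>"
  shows "Le D A \<gamma> \<psi>"
proof -
  let ?cg = "cmp A \<gamma>" and ?cp = "cmp A \<phi>" and ?cq = "cmp A \<psi>"
  have cdg: "Cd D ?cg = A" using cmp_cd g by blast
  have cdp: "Cd D ?cp = A" using cmp_cd p by blast
  have "Le D (Dm D ?cg) (Re D ?cg \<gamma>) (Re D ?cg \<phi>)" using Re_mono cdg g p l2 by blast
  hence "Re D ?cg \<phi> = tp (Dm D ?cg)" using top_eq cmp_Re[OF g] Re_Pr[OF cdg p] by simp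
  from factor[OF p cdg this] obtain h where h: "Dm D h = Dm D ?cg" "Cd D h = Dm D ?cp" "Cp D ?cp h = ?cg" by blast
  have l3: "Le D (Dm D ?cp) (Re D ?cp \<gamma>) (Re D ?cp \<psi>)" using adj_imp[OF g p q] l1 by simp
  have "Le D (Dm D h) (Re D h (Re D ?cp \<gamma>)) (Re D h (Re D ?cp \<psi>))"
    using Re_mono[OF h(2) _ _ l3] Re_Pr[OF cdp] g q by blast
  moreover have "Re D h (Re D ?cp \<gamma>) = Re D ?cg \<gamma>" using Re_comp h g cdp by metis
  moreover have "Re D h (Re D ?cp \<psi>) = Re D ?cg \<psi>" using Re_comp h q cdp by metis
  ultimately have "Le D (Dm D ?cg) (tp (Dm D ?cg)) (Re D ?cg \<psi>)" using cmp_Re[OF g] h by simp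
  hence "Re D ?cg \<psi> = tp (Dm D ?cg)" using top_eq Re_Pr[OF cdg q] by blast
  from factor[OF q cdg this] obtain h' where "Dm D h' = Dm D ?cg" "Cd D h' = Dm D ?cq" "Cp D ?cq h' = ?cg" by blast
  thus ?thesis using full g q unfolding full_comprehension_def by blast
qed

lemma cond_a:
  assumes p: "\<phi> \<in> Pr D A" and q: "\<psi> \<in> Pr D A" shows "Le D A \<phi> (I A \<psi> \<phi>)"
  using adj_imp[OF p q p] refl Re_Pr cmp_cd q p by metis

lemma cond_d:
  assumes g: "\<gamma> \<in> Pr D A" and p: "\<phi> \<in> Pr D A" and q: "\<psi> \<in> Pr D A" and l: "Le D A \<phi> \<psi>"
  shows "Le D A \<gamma> (I A \<phi> \<psi>)"
proof -
  let ?c = "cmp A \<phi>"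
  have cd: "Cd D ?c = A" using cmp_cd p by blast
  have "Le D (Dm D ?c) (Re D ?c \<gamma>) (tp (Dm D ?c))" using tp_top Re_Pr[OF cd g] by blast
  moreover have "Le D (Dm D ?c) (tp (Dm D ?c)) (Re D ?c \<psi>)" using Re_mono[OF cd p q l] cmp_Re[OF p] by simp
  ultimately show ?thesis using adj_imp[OF g p q] trans Re_Pr[OF cd] g q tp_Pr by blast
qed

end

locale dc3 = dc2 +
  assumes rbc: "restricted_beck_chevalley D (compr_class D cmp) Pi"
begin

lemma stab:
  assumes a: "\<alpha> \<in> Pr D (Cd D f)" and b: "\<beta> \<in> Pr D (Cd D f)"
  shows "Re D f (I (Cd D f) \<alpha> \<beta>) = I (Dm D f) (Re D f \<alpha>) (Re D f \<beta>)"
proof -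
  let ?c = "cmp (Cd D f) \<alpha>" let ?k = "cmp (Dm D f) (Re D f \<alpha>)"
  obtain g where g: "Dm D g = Dm D ?k" "Cd D g = Dm D ?c" "Cp D ?c g = Cp D f ?k" "is_pullback D f ?k ?c g"
    using pb_lemma[OF a] by blast
  have ra: "Re D f \<alpha> \<in> Pr D (Dm D f)" using Re_Pr a by blast
  have cc: "compr_class D cmp ?c" "compr_class D cmp ?k" unfolding compr_class_def using a ra by blast+
  have ccd: "Cd D ?c = Cd D f" using cmp_cd a by blast
  have kcd: "Cd D ?k = Dm D f" using cmp_cd ra by blast
  have "Re D f (Pi ?c (Re D ?c \<beta>)) = Pi ?k (Re D g (Re D ?c \<beta>))"
    using rbc cc g(4) b ccd unfolding restricted_beck_chevalley_def by metis
  moreover have "Re D g (Re D ?c \<beta>) = Re D ?k (Re D f \<beta>)"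
  proof -
    have "Re D g (Re D ?c \<beta>) = Re D (Cp D ?c g) \<beta>" using Re_comp g b ccd by metis
    also have "\<dots> = Re D (Cp D f ?k) \<beta>" using g by simp
    also have "\<dots> = Re D ?k (Re D f \<beta>)" using Re_comp kcd b by metis
    finally show ?thesis .
  qed
  ultimately show ?thesis unfolding compr_imp_def by simp
qed

lemma cond_b:
  assumes full: "full_comprehension D cmp"
    and g: "\<gamma> \<in> Pr D A" and p: "\<phi> \<in> Pr D A" and q: "\<psi> \<in> Pr D A"
  shows "Le D A (I A \<gamma> (I A \<phi> \<psi>)) (I A (I A \<gamma> \<phi>) (I A \<gamma> \<psi>))"
proof -
  let ?d = "I A \<gamma> \<phi>"
  have dP: "?d \<in> Pr D A" using I_Pr g p by blast
  let ?cd = "cmp A ?d" let ?B = "Dm D ?cd"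
  have cdd: "Cd D ?cd = A" using cmp_cd dP by blast
  let ?c = "Re D ?cd \<gamma>" and ?p = "Re D ?cd \<phi>" and ?q = "Re D ?cd \<psi>"
  have cP: "?c \<in> Pr D ?B" and pP: "?p \<in> Pr D ?B" and qP: "?q \<in> Pr D ?B" using Re_Pr cdd g p q by blast+
  have s1: "Re D ?cd ?d = I ?B ?c ?p" using stab[of \<gamma> ?cd \<phi>] cdd g p by simp
  have tB: "I ?B ?c ?p = tp ?B" using s1 cmp_Re[OF dP] by simp
  have pqP: "I A \<phi> \<psi> \<in> Pr D A" using I_Pr p q by blast
  have s2: "Re D ?cd (I A \<gamma> (I A \<phi> \<psi>)) = I ?B ?c (I ?B ?p ?q)"
    using stab[of \<gamma> ?cd "I A \<phi> \<psi>"] stab[of \<phi> ?cd \<psi>] cdd g p q pqP by simp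
  have s3: "Re D ?cd (I A \<gamma> \<psi>) = I ?B ?c ?q" using stab[of \<gamma> ?cd \<psi>] cdd g q by simp
  let ?e = "I ?B ?c (I ?B ?p ?q)"
  have pqB: "I ?B ?p ?q \<in> Pr D ?B" using I_Pr pP qP by blast
  have eP: "?e \<in> Pr D ?B" using I_Pr cP pqB by blast
  let ?cc = "cmp ?B ?c" let ?C = "Dm D ?cc"
  have ccd: "Cd D ?cc = ?B" using cmp_cd cP by blast
  have p'P: "Re D ?cc ?p \<in> Pr D ?C" and q'P: "Re D ?cc ?q \<in> Pr D ?C" using Re_Pr ccd pP qP by blast+
  have tC: "tp ?C = I ?C (tp ?C) (Re D ?cc ?p)"
  proof -
    have "tp ?C = Re D ?cc (tp ?B)" using Re_tp'[OF ccd] by simp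
    also have "\<dots> = Re D ?cc (I ?B ?c ?p)" using tB by simp
    also have "\<dots> = I ?C (Re D ?cc ?c) (Re D ?cc ?p)" using stab[of ?c ?cc ?p] ccd cP pP by simp
    finally show ?thesis using cmp_Re[OF cP] by simp
  qed
  have tle: "Le D ?C (tp ?C) (Re D ?cc ?p)"
    using cond_c_of_full[OF full tp_Pr tp_Pr p'P] tC refl[OF tp_Pr] by simp
  let ?e' = "Re D ?cc ?e"
  have e'P: "?e' \<in> Pr D ?C" using Re_Pr ccd eP by blast
  have e'eq: "?e' = I ?C (tp ?C) (I ?C (Re D ?cc ?p) (Re D ?cc ?q))"
    using stab[of ?c ?cc "I ?B ?p ?q"] stab[of ?p ?cc ?q] ccd cP pP qP pqB cmp_Re[OF cP] by simp
  have pq'P: "I ?C (Re D ?cc ?p) (Re D ?cc ?q) \<in> Pr D ?C" using I_Pr p'P q'P by blast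
  have "Le D ?C ?e' (I ?C (Re D ?cc ?p) (Re D ?cc ?q))"
    using cond_c_of_full[OF full e'P tp_Pr pq'P] e'eq refl[OF e'P] tp_top[OF e'P] by simp
  moreover have "Le D ?C ?e' (Re D ?cc ?p)" using trans[OF e'P tp_Pr p'P] tp_top[OF e'P] tle by blast
  ultimately have "Le D ?C ?e' (Re D ?cc ?q)" using cond_c_of_full[OF full e'P p'P q'P] by blast
  hence "Le D ?B ?e (I ?B ?c ?q)" using adj_imp[OF eP cP qP] by simp
  hence "Le D ?B (Re D ?cd (I A \<gamma> (I A \<phi> \<psi>))) (Re D ?cd (I A \<gamma> \<psi>))" using s2 s3 adj_imp[OF eP cP qP] by simp
  moreover have "I A \<gamma> (I A \<phi> \<psi>) \<in> Pr D A" "I A \<gamma> \<psi> \<in> Pr D A" using I_Pr g pqP q by blast+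
  ultimately show ?thesis using adj_imp[of "I A \<gamma> (I A \<phi> \<psi>)" A ?d "I A \<gamma> \<psi>"] dP by simp
qed


lemma cond_iii:
  assumes padj: "\<forall>u. is_projection D u \<longrightarrow> right_adjoint D u (Pi u)"
    and bc: "beck_chevalley D (is_projection D) Pi"
    and pj: "is_projection D u" and a: "\<alpha> \<in> Pr D (Cd D u)" and b: "\<beta> \<in> Pr D (Dm D u)"
  shows "Pi u (I (Dm D u) (Re D u \<alpha>) \<beta>) = I (Cd D u) \<alpha> (Pi u \<beta>)"
proof -
  let ?A = "Cd D u" and ?Y = "Dm D u" let ?a' = "Re D u \<alpha>"
  let ?k = "cmp ?Y ?a'" and ?c = "cmp ?A \<alpha>"
  have a'P: "?a' \<in> Pr D ?Y" using Re_Pr a by blast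
  obtain g where g: "Dm D g = Dm D ?k" "Cd D g = Dm D ?c" "Cp D ?c g = Cp D u ?k" "is_pullback D u ?k ?c g"
    using pb_lemma[OF a] by blast
  have gp: "is_projection D g" using proj_lemma[OF pj a HOL.refl g(1-3)] .
  have pb: "is_pullback D ?c g u ?k" using pb_sym g(4) .
  have bce: "Re D ?c (Pi u \<beta>) = Pi g (Re D ?k \<beta>)" using bc pj gp pb b unfolding beck_chevalley_def by blast
  have ua: "right_adjoint D u (Pi u)" using padj pj by blast
  have ga: "right_adjoint D g (Pi g)" using padj gp by blast
  have kcd: "Cd D ?k = ?Y" using cmp_cd a'P by blast
  have ccd: "Cd D ?c = ?A" using cmp_cd a by blast
  have kb: "Re D ?k \<beta> \<in> Pr D (Dm D g)" using Re_Pr kcd b g by metis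
  have piuP: "Pi u \<beta> \<in> Pr D ?A" using ua b unfolding right_adjoint_def by blast
  have iyP: "I ?Y ?a' \<beta> \<in> Pr D ?Y" using I_Pr a'P b by blast
  have LP: "Pi u (I ?Y ?a' \<beta>) \<in> Pr D ?A" using ua iyP unfolding right_adjoint_def by blast
  have RP: "I ?A \<alpha> (Pi u \<beta>) \<in> Pr D ?A" using I_Pr a piuP by blast
  have key: "\<And>x. x \<in> Pr D ?A \<Longrightarrow> Le D ?A x (Pi u (I ?Y ?a' \<beta>)) \<longleftrightarrow> Le D ?A x (I ?A \<alpha> (Pi u \<beta>))"
  proof -
    fix x assume x: "x \<in> Pr D ?A"
    have ux: "Re D u x \<in> Pr D ?Y" using Re_Pr x by blast
    have cx: "Re D ?c x \<in> Pr D (Cd D g)" using Re_Pr ccd x g by metis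
    have e: "Re D g (Re D ?c x) = Re D ?k (Re D u x)"
    proof -
      have "Re D g (Re D ?c x) = Re D (Cp D ?c g) x" using Re_comp g x ccd by metis
      also have "\<dots> = Re D (Cp D u ?k) x" using g by simp
      also have "\<dots> = Re D ?k (Re D u x)" using Re_comp kcd x by metis
      finally show ?thesis .
    qed
    have "Le D ?A x (Pi u (I ?Y ?a' \<beta>)) \<longleftrightarrow> Le D ?Y (Re D u x) (I ?Y ?a' \<beta>)"
      using adj_iff[OF ua x iyP] .
    also have "\<dots> \<longleftrightarrow> Le D (Dm D ?k) (Re D ?k (Re D u x)) (Re D ?k \<beta>)"
      using adj_imp[OF ux a'P b] .
    also have "\<dots> \<longleftrightarrow> Le D (Dm D g) (Re D g (Re D ?c x)) (Re D ?k \<beta>)" using e g by simp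
    also have "\<dots> \<longleftrightarrow> Le D (Cd D g) (Re D ?c x) (Pi g (Re D ?k \<beta>))"
      using adj_iff[OF ga cx kb] by simp
    also have "\<dots> \<longleftrightarrow> Le D (Dm D ?c) (Re D ?c x) (Re D ?c (Pi u \<beta>))" using bce g by simp
    also have "\<dots> \<longleftrightarrow> Le D ?A x (I ?A \<alpha> (Pi u \<beta>))" using adj_imp[OF x a piuP] by simp
    finally show "Le D ?A x (Pi u (I ?Y ?a' \<beta>)) \<longleftrightarrow> Le D ?A x (I ?A \<alpha> (Pi u \<beta>))" .
  qed
  show ?thesis using key[OF LP] key[OF RP] refl[OF LP] refl[OF RP] antisym[OF LP RP] by blast
qed

lemma implicational_of_full:
  assumes padj: "\<forall>u. is_projection D u \<longrightarrow> right_adjoint D u (Pi u)"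
    and bc: "beck_chevalley D (is_projection D) Pi"
    and full: "full_comprehension D cmp"
  shows "implicational D Pi I"
  unfolding implicational_def
proof (intro conjI allI ballI)
  show "\<And>A \<alpha> \<beta>. \<alpha> \<in> Pr D A \<Longrightarrow> \<beta> \<in> Pr D A \<Longrightarrow> I A \<alpha> \<beta> \<in> Pr D A" using I_Pr by blast
  show "\<And>f \<alpha> \<beta>. \<alpha> \<in> Pr D (Cd D f) \<Longrightarrow> \<beta> \<in> Pr D (Cd D f) \<Longrightarrow>
     Re D f (I (Cd D f) \<alpha> \<beta>) = I (Dm D f) (Re D f \<alpha>) (Re D f \<beta>)" using stab by blast
  show "\<And>u. is_projection D u \<longrightarrow> (\<forall>\<alpha>\<in>Pr D (Cd D u). \<forall>\<beta>\<in>Pr D (Dm D u).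
     Pi u (I (Dm D u) (Re D u \<alpha>) \<beta>) = I (Cd D u) \<alpha> (Pi u \<beta>))" using cond_iii[OF padj bc] by blast
  fix A \<gamma> \<phi> \<psi> assume g: "\<gamma> \<in> Pr D A" and p: "\<phi> \<in> Pr D A" and q: "\<psi> \<in> Pr D A"
  show "Le D A \<phi> (I A \<psi> \<phi>)" using cond_a p q .
  show "Le D A (I A \<gamma> (I A \<phi> \<psi>)) (I A (I A \<gamma> \<phi>) (I A \<gamma> \<psi>))" using cond_b[OF full g p q] .
  show "Le D A \<gamma> (I A \<phi> \<psi>) \<and> Le D A \<gamma> \<phi> \<longrightarrow> Le D A \<gamma> \<psi>" using cond_c_of_full[OF full g p q] by blast
  show "Le D A \<phi> \<psi> \<longrightarrow> Le D A \<gamma> (I A \<phi> \<psi>)" using cond_d[OF g p q] by blast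
qed

end

theorem mainTheorem3:
  fixes D :: "('o, 'm, 'p) doctrine_data"
    and tp :: "'o \<Rightarrow> 'p" and cmp :: "'o \<Rightarrow> 'p \<Rightarrow> 'm" and Pi :: "'m \<Rightarrow> 'p \<Rightarrow> 'p"
  shows
    "(doctrine D \<and> has_comprehension D tp cmp \<and>
      (\<forall>A. \<forall>\<alpha>\<in>Pr D A. right_adjoint D (cmp A \<alpha>) (Pi (cmp A \<alpha>))) \<and>
      cond_iv_c D (compr_imp D cmp Pi)
      \<longrightarrow> full_comprehension D cmp)
     \<and>
     (Pi_doctrine D Pi \<and> has_comprehension D tp cmp \<and>
      restricted_Pi_class_doctrine D (compr_class D cmp) Pi
      \<longrightarrow> (implicational D Pi (compr_imp D cmp Pi) \<longleftrightarrow> full_comprehension D cmp))"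
proof (intro conjI impI)
  assume h: "doctrine D \<and> has_comprehension D tp cmp \<and>
      (\<forall>A. \<forall>\<alpha>\<in>Pr D A. right_adjoint D (cmp A \<alpha>) (Pi (cmp A \<alpha>))) \<and>
      cond_iv_c D (compr_imp D cmp Pi)"
  interpret dc2 D tp cmp Pi using h by unfold_locales blast+
  show "full_comprehension D cmp" using full_of_c h by blast
next
  assume h: "Pi_doctrine D Pi \<and> has_comprehension D tp cmp \<and>
      restricted_Pi_class_doctrine D (compr_class D cmp) Pi"
  have doc: "doctrine D" using h unfolding Pi_doctrine_def by blast
  have ad: "\<And>A \<alpha>. \<alpha> \<in> Pr D A \<Longrightarrow> right_adjoint D (cmp A \<alpha>) (Pi (cmp A \<alpha>))"
    using h unfolding restricted_Pi_class_doctrine_def compr_class_def by blast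
  have rb: "restricted_beck_chevalley D (compr_class D cmp) Pi"
    using h unfolding restricted_Pi_class_doctrine_def by blast
  interpret dc3 D tp cmp Pi using doc h ad rb by unfold_locales blast+
  have padj: "\<forall>u. is_projection D u \<longrightarrow> right_adjoint D u (Pi u)" and bc: "beck_chevalley D (is_projection D) Pi"
    using h unfolding Pi_doctrine_def by blast+
  show "implicational D Pi (compr_imp D cmp Pi) \<longleftrightarrow> full_comprehension D cmp"
  proof
    assume "implicational D Pi (compr_imp D cmp Pi)"
    hence "cond_iv_c D (compr_imp D cmp Pi)" unfolding implicational_def cond_iv_c_def by blast
    thus "full_comprehension D cmp" using full_of_c by blast
  next
    assume "full_comprehension D cmp"
    thus "implicational D Pi (compr_imp D cmp Pi)" using implicational_of_full[OF padj bc] by blast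
  qed
qed

end
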